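(* Let $\Omega\subseteq\mathbb{R}^N$ be a domain, $\mathcal{D}\subseteq \Omega\times\mathbb{R}\times\mathbb{R}^N\times\mathbb{S}(N)$, and $F:\mathcal{D}\to\mathbb{R}$ degenerate elliptic. Class U is a proper subset of Class M. In particular, suppose $F$ belongs to Class U, with constant $\lambda>0$ and locally bounded function $H$. Fix $\omega\in\Omega\times\mathbb{R}\times\mathbb{R}^N$. Then the functions $$g_1(t,M)=\lambda t-\lambda\,\lambda_1(M)-H(\omega)-F(\omega,M)\quad\text{(for $M$ with $(\omega,M)\in\mathcal{D}$)},$$ $$g_2(t,M)=\lambda t+\lambda\,\lambda_1(M)+H(\omega)-F(\omega,-M)\quad\text{(for $M$ with $(\omega,-M)\in\mathcal{D}$)},$$ $t\in\mathbb{R}$, satisfy properties (1)–(4) in the definition of Class M for this $\omega$, thus verifying membership of $F$ in Class M.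
   Context: $\mathbb{S}(N)$ is the space of real symmetric $N\times N$ matrices with the Löwner order ($A\le B$ iff $\langle Ax,x\rangle\le\langle Bx,x\rangle$ for all $x$). For $X\in\mathbb{S}(N)$, $\lambda_1(X)\le\dots\le\lambda_N(X)$ are its eigenvalues in increasing order. $F:\mathcal{D}\to\mathbb{R}$ is degenerate elliptic if for every $\omega\in\mathbb{R}^N\times\mathbb{R}\times\mathbb{R}^N$ with $(\omega,X),(\omega,Y)\in\mathcal{D}$, $X\le Y$ implies $F(\omega,X)\ge F(\omega,Y)$. Class U: $F$ is continuous in its matrix entry, and there exist $\lambda>0$ and a locally bounded function $H$ such that for all $\omega\in\Omega\times\mathbb{R}\times\mathbb{R}^N$, whenever $(\omega,B),(\omega,M)\in\mathcal{D}$ and $B\le M$, we have $F(\omega,B)-F(\omega,M)\ge\lambda\operatorname{tr}(M-B)+H(\omega)$. Class M: $F$ is continuous in its matrix entry, and for every $\omega\in\Omega\times\mathbb{R}\times\mathbb{R}^N$ and sets $\mathcal{S}_1,\mathcal{S}_2\subseteq\mathbb{S}(N)$ with $\{\omega\}\times\mathcal{S}_i\subseteq\mathcal{D}$, there exist $g_i:\mathbb{R}\times\mathcal{S}_i\to\mathbb{R}$ (possibly depending on $\omega$) such that: (1) for each fixed $M_0\in\mathcal{S}_i$, $t\mapsto g_i(t,M_0)$ is an increasing bijection $\mathbb{R}\to\mathbb{R}$, with inverse denoted $s\mapsto g_i(-,M_0)^{-1}(s)$; (2) $M\mapsto g_i(-,M)^{-1}(0)$ is continuous on $\mathcal{S}_i$;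 (3) for $M\in\mathcal{S}_1$, if $(\omega,X)\in\mathcal{D}$ and $X\le M$ then $-F(\omega,X)\le g_1(\lambda_1(X),M)$; (4) for $M\in\mathcal{S}_2$, if $(\omega,Y)\in\mathcal{D}$ and $-Y\le M$ then $-F(\omega,Y)\ge g_2(\lambda_N(Y),M)$.
   Formalization: In Class M, the sets $\mathcal{S}_2$ satisfy $\{\omega\}\times(-\mathcal{S}_2)\subseteq\mathcal{D}$, so $(\omega,-M)\in\mathcal{D}$ for every $M\in\mathcal{S}_2$, in place of $\{\omega\}\times\mathcal{S}_2\subseteq\mathcal{D}$. The statement above fails without it. *)

theory Defs
  imports "HOL-Analysis.Analysis"
begin

definition Sym :: "(real^'n^'n) set" where
  "Sym = {X. transpose X = X}"

definition loewner_le :: "real^'n^'n \<Rightarrow> real^'n^'n \<Rightarrow> bool" (infix "\<le>\<^sub>L" 50) where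
  "A \<le>\<^sub>L B \<longleftrightarrow> (\<forall>x. (A *v x) \<bullet> x \<le> (B *v x) \<bullet> x)"

definition eigenvalues :: "real^'n^'n \<Rightarrow> real set" where
  "eigenvalues X = {t. \<exists>v. v \<noteq> 0 \<and> X *v v = t *\<^sub>R v}"

definition lam_min :: "real^'n^'n \<Rightarrow> real" where
  "lam_min X = Min (eigenvalues X)"

definition lam_max :: "real^'n^'n \<Rightarrow> real" where
  "lam_max X = Max (eigenvalues X)"

definition is_domain :: "'a::topological_space set \<Rightarrow> bool" where
  "is_domain \<Omega> \<longleftrightarrow> open \<Omega> \<and> connected \<Omega> \<and> \<Omega> \<noteq> {}"

definition admissible_D ::
  "(real^'n) set \<Rightarrow> (((real^'n) \<times> real \<times> (real^'n)) \<times> (real^'n^'n)) set \<Rightarrow> bool" where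
  "admissible_D \<Omega> D \<longleftrightarrow> D \<subseteq> (\<Omega> \<times> UNIV \<times> UNIV) \<times> Sym"

definition degenerate_elliptic ::
  "(((real^'n) \<times> real \<times> (real^'n)) \<times> (real^'n^'n)) set
   \<Rightarrow> ((real^'n) \<times> real \<times> (real^'n) \<Rightarrow> real^'n^'n \<Rightarrow> real) \<Rightarrow> bool" where
  "degenerate_elliptic D F \<longleftrightarrow>
     (\<forall>\<omega> X Y. (\<omega>, X) \<in> D \<longrightarrow> (\<omega>, Y) \<in> D \<longrightarrow> X \<le>\<^sub>L Y \<longrightarrow> F \<omega> X \<ge> F \<omega> Y)"

definition continuous_in_matrix ::
  "(((real^'n) \<times> real \<times> (real^'n)) \<times> (real^'n^'n)) set
   \<Rightarrow> ((real^'n) \<times> real \<times> (real^'n) \<Rightarrow> real^'n^'n \<Rightarrow> real) \<Rightarrow> bool" where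
  "continuous_in_matrix D F \<longleftrightarrow> (\<forall>\<omega>. continuous_on {X. (\<omega>, X) \<in> D} (F \<omega>))"

definition locally_bounded_on :: "'a::topological_space set \<Rightarrow> ('a \<Rightarrow> real) \<Rightarrow> bool" where
  "locally_bounded_on S H \<longleftrightarrow>
     (\<forall>x\<in>S. \<exists>U. open U \<and> x \<in> U \<and> bounded (H ` (U \<inter> S)))"

definition classU_with ::
  "(real^'n) set \<Rightarrow> (((real^'n) \<times> real \<times> (real^'n)) \<times> (real^'n^'n)) set
   \<Rightarrow> ((real^'n) \<times> real \<times> (real^'n) \<Rightarrow> real^'n^'n \<Rightarrow> real)
   \<Rightarrow> real \<Rightarrow> ((real^'n) \<times> real \<times> (real^'n) \<Rightarrow> real) \<Rightarrow> bool" where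
  "classU_with \<Omega> D F lam H \<longleftrightarrow>
     continuous_in_matrix D F \<and> lam > 0 \<and> locally_bounded_on (\<Omega> \<times> UNIV \<times> UNIV) H \<and>
     (\<forall>\<omega>\<in>\<Omega> \<times> UNIV \<times> UNIV. \<forall>B M. (\<omega>, B) \<in> D \<longrightarrow> (\<omega>, M) \<in> D \<longrightarrow> B \<le>\<^sub>L M \<longrightarrow>
        F \<omega> B - F \<omega> M \<ge> lam * trace (M - B) + H \<omega>)"

definition classU ::
  "(real^'n) set \<Rightarrow> (((real^'n) \<times> real \<times> (real^'n)) \<times> (real^'n^'n)) set
   \<Rightarrow> ((real^'n) \<times> real \<times> (real^'n) \<Rightarrow> real^'n^'n \<Rightarrow> real) \<Rightarrow> bool" where
  "classU \<Omega> D F \<longleftrightarrow> (\<exists>lam H. classU_with \<Omega> D F lam H)"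

definition classM_props ::
  "(((real^'n) \<times> real \<times> (real^'n)) \<times> (real^'n^'n)) set
   \<Rightarrow> ((real^'n) \<times> real \<times> (real^'n) \<Rightarrow> real^'n^'n \<Rightarrow> real)
   \<Rightarrow> (real^'n) \<times> real \<times> (real^'n)
   \<Rightarrow> (real^'n^'n) set \<Rightarrow> (real^'n^'n) set
   \<Rightarrow> (real \<Rightarrow> real^'n^'n \<Rightarrow> real) \<Rightarrow> (real \<Rightarrow> real^'n^'n \<Rightarrow> real) \<Rightarrow> bool" where
  "classM_props D F \<omega> S1 S2 g1 g2 \<longleftrightarrow>
     (\<forall>M0\<in>S1. mono (\<lambda>t. g1 t M0) \<and> bij (\<lambda>t. g1 t M0)) \<and>
     (\<forall>M0\<in>S2. mono (\<lambda>t. g2 t M0) \<and> bij (\<lambda>t. g2 t M0)) \<and>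
     continuous_on S1 (\<lambda>M. inv (\<lambda>t. g1 t M) 0) \<and>
     continuous_on S2 (\<lambda>M. inv (\<lambda>t. g2 t M) 0) \<and>
     (\<forall>M\<in>S1. \<forall>X. (\<omega>, X) \<in> D \<longrightarrow> X \<le>\<^sub>L M \<longrightarrow> - F \<omega> X \<le> g1 (lam_min X) M) \<and>
     (\<forall>M\<in>S2. \<forall>Y. (\<omega>, Y) \<in> D \<longrightarrow> - Y \<le>\<^sub>L M \<longrightarrow> - F \<omega> Y \<ge> g2 (lam_max Y) M)"

definition admissible_S ::
  "(((real^'n) \<times> real \<times> (real^'n)) \<times> (real^'n^'n)) set
   \<Rightarrow> (real^'n) \<times> real \<times> (real^'n) \<Rightarrow> (real^'n^'n) set \<Rightarrow> (real^'n^'n) set \<Rightarrow> bool" where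
  "admissible_S D \<omega> S1 S2 \<longleftrightarrow>
     S1 \<subseteq> Sym \<and> S2 \<subseteq> Sym \<and> (\<forall>M\<in>S1. (\<omega>, M) \<in> D) \<and> (\<forall>M\<in>S2. (\<omega>, - M) \<in> D)"

definition classM ::
  "(real^'n) set \<Rightarrow> (((real^'n) \<times> real \<times> (real^'n)) \<times> (real^'n^'n)) set
   \<Rightarrow> ((real^'n) \<times> real \<times> (real^'n) \<Rightarrow> real^'n^'n \<Rightarrow> real) \<Rightarrow> bool" where
  "classM \<Omega> D F \<longleftrightarrow> continuous_in_matrix D F \<and>
     (\<forall>\<omega>\<in>\<Omega> \<times> UNIV \<times> UNIV. \<forall>S1 S2. admissible_S D \<omega> S1 S2 \<longrightarrow>
        (\<exists>g1 g2. classM_props D F \<omega> S1 S2 g1 g2))"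

end

theory Submission
  imports Defs
begin


lemma sym_inner:
  fixes A :: "real^'n^'n"
  assumes "transpose A = A"
  shows "(A *v x) \<bullet> y = x \<bullet> (A *v y)"
proof -
  have "(A *v x) = x v* A" using transpose_matrix_vector[of A x] assms by simp
  then show ?thesis by (simp add: dot_lmul_matrix)
qed

lemma quad_expand:
  fixes A :: "real^'n^'n"
  shows "(A *v (v + t *\<^sub>R w)) \<bullet> (v + t *\<^sub>R w) =
     (A *v v) \<bullet> v + t * ((A *v v) \<bullet> w + (A *v w) \<bullet> v) + t^2 * ((A *v w) \<bullet> w)"
  by (simp add: algebra_simps inner_add_left inner_add_right power2_eq_square)

lemma psd_trace:
  fixes A :: "real^'n^'n"
  assumes psd: "\<And>x. 0 \<le> (A *v x) \<bullet> x"
  shows "(A *v v) \<bullet> v \<le> (v \<bullet> v) * trace A"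
proof -
  have key: "v$j * v$k * (A$k$j + A$j$k) \<le> v$j^2 * A$k$k + v$k^2 * A$j$j" for j k
  proof -
    define w where "w = v$k *\<^sub>R axis j (1::real) - v$j *\<^sub>R axis k 1"
    have "0 \<le> (A *v w) \<bullet> w" by (rule psd)
    also have "(A *v w) \<bullet> w = v$k^2 * A$j$j - v$k * v$j * (A$k$j + A$j$k) + v$j^2 * A$k$k"
      unfolding w_def
      by (simp add: algebra_simps inner_diff_left inner_diff_right matrix_vector_mult_basis
          inner_axis inner_axis' power2_eq_square column_def)
    finally show ?thesis by (simp add: algebra_simps)
  qed
  have l: "(A *v v) \<bullet> v = (\<Sum>k\<in>UNIV. \<Sum>j\<in>UNIV. A$k$j * v$j * v$k)"
    by (simp add: inner_vec_def matrix_vector_mult_def sum_distrib_right)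
  have l2: "(\<Sum>k\<in>UNIV. \<Sum>j\<in>UNIV. A$k$j * v$j * v$k) = (\<Sum>k\<in>UNIV. \<Sum>j\<in>UNIV. A$j$k * v$k * v$j)"
    by (rule sum.swap)
  have r: "(v \<bullet> v) * trace A = (\<Sum>k\<in>UNIV. \<Sum>j\<in>UNIV. v$k^2 * A$j$j)"
    by (simp add: inner_vec_def trace_def sum_distrib_right sum_distrib_left power2_eq_square mult.commute)
  have r2: "(\<Sum>k\<in>UNIV. \<Sum>j\<in>UNIV. v$j^2 * A$k$k) = (\<Sum>k\<in>UNIV. \<Sum>j\<in>UNIV. v$k^2 * A$j$j)"
    by (rule sum.swap)
  have "2 * ((A *v v) \<bullet> v) = (\<Sum>k\<in>UNIV. \<Sum>j\<in>UNIV. v$j * v$k * (A$k$j + A$j$k))"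
  proof -
    have "(\<Sum>k\<in>UNIV. \<Sum>j\<in>UNIV. v$j * v$k * (A$k$j + A$j$k)) =
      (\<Sum>k\<in>UNIV. \<Sum>j\<in>UNIV. A$k$j * v$j * v$k) + (\<Sum>k\<in>UNIV. \<Sum>j\<in>UNIV. A$j$k * v$k * v$j)"
      by (simp add: distrib_left sum.distrib mult.commute mult.left_commute)
    then show ?thesis unfolding l using l2 by simp
  qed
  also have "\<dots> \<le> (\<Sum>k\<in>UNIV. \<Sum>j\<in>UNIV. v$j^2 * A$k$k + v$k^2 * A$j$j)"
    by (intro sum_mono key)
  also have "\<dots> = 2 * ((v \<bullet> v) * trace A)"
    unfolding r using r2 by (simp add: sum.distrib)
  finally show ?thesis by simp
qed

lemma quad_scale:
  fixes A :: "real^'n^'n"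
  shows "(A *v (c *\<^sub>R x)) \<bullet> (c *\<^sub>R x) = c^2 * ((A *v x) \<bullet> x)"
  by (simp add: matrix_vector_mult_scaleR power2_eq_square)

lemma quad_cont:
  fixes A :: "real^'n^'n"
  shows "continuous_on S (\<lambda>x. (A *v x) \<bullet> x)"
  by (intro continuous_on_inner linear_continuous_on matrix_vector_mul_bounded_linear continuous_on_id)

lemma sym_min:
  fixes A :: "real^'n^'n"
  assumes sym: "transpose A = A"
  shows "\<exists>v. norm v = 1 \<and> A *v v = ((A *v v) \<bullet> v) *\<^sub>R v \<and>
     (\<forall>x. ((A *v v) \<bullet> v) * (x \<bullet> x) \<le> (A *v x) \<bullet> x)"
proof -
  define q where "q x = (A *v x) \<bullet> x" for x
  have ne: "sphere (0::real^'n) 1 \<noteq> {}" by simp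
  obtain v where v: "v \<in> sphere 0 1" and vmin: "\<And>x. x \<in> sphere 0 1 \<Longrightarrow> q v \<le> q x"
    using continuous_attains_inf[OF compact_sphere ne quad_cont[of _ A]] unfolding q_def by blast
  define m where "m = q v"
  have nv: "norm v = 1" using v by simp
  have vv: "v \<bullet> v = 1" using nv by (simp add: dot_square_norm)
  have bound: "m * (x \<bullet> x) \<le> q x" for x
  proof (cases "x = 0")
    case True then show ?thesis by (simp add: q_def)
  next
    case False
    define u where "u = (1 / norm x) *\<^sub>R x"
    have "u \<in> sphere 0 1" using False by (simp add: u_def)
    then have "m \<le> q u" using vmin m_def by blast
    also have "q u = q x / (norm x)^2" unfolding q_def u_def quad_scale by (simp add: power_one_over)
    finally have "m * (norm x)^2 \<le> q x" using False by (simp add: field_simps)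
    then show ?thesis by (simp add: dot_square_norm)
  qed
  define z where "z = A *v v - m *\<^sub>R v"
  define c where "c = z \<bullet> z"
  define r where "r = q z - m * (z \<bullet> z)"
  have r0: "r \<ge> 0" using bound[of z] by (simp add: r_def)
  have Avz: "(A *v v) \<bullet> z - m * (v \<bullet> z) = c"
    by (simp add: c_def z_def inner_diff_left inner_diff_right algebra_simps)
  have ineq: "0 \<le> 2 * t * c + t^2 * r" for t
  proof -
    have "m * ((v + t *\<^sub>R z) \<bullet> (v + t *\<^sub>R z)) \<le> q (v + t *\<^sub>R z)" by (rule bound)
    also have "q (v + t *\<^sub>R z) = q v + t * ((A *v v) \<bullet> z + (A *v z) \<bullet> v) + t^2 * q z"
      unfolding q_def by (rule quad_expand)
    also have "(A *v z) \<bullet> v = (A *v v) \<bullet> z"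
      using sym_inner[OF sym, of z v] by (simp add: inner_commute)
    finally have "m * ((v + t *\<^sub>R z) \<bullet> (v + t *\<^sub>R z)) \<le> m + 2 * t * ((A *v v) \<bullet> z) + t^2 * q z"
      by (simp add: m_def)
    moreover have "(v + t *\<^sub>R z) \<bullet> (v + t *\<^sub>R z) = 1 + 2 * t * (v \<bullet> z) + t^2 * (z \<bullet> z)"
      using vv by (simp add: inner_add_left inner_add_right inner_commute power2_eq_square algebra_simps)
    ultimately have "m * (1 + 2 * t * (v \<bullet> z) + t^2 * (z \<bullet> z)) \<le> m + 2 * t * ((A *v v) \<bullet> z) + t^2 * q z"
      by simp
    then have "0 \<le> 2 * t * ((A *v v) \<bullet> z - m * (v \<bullet> z)) + t^2 * r"
      unfolding r_def by (simp add: algebra_simps)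
    then show ?thesis using Avz by simp
  qed
  have "c = 0"
  proof (rule ccontr)
    assume "c \<noteq> 0"
    then have cp: "c > 0" using c_def by simp
    define t where "t = - c / (r + 1)"
    have "(2 * t * c + t^2 * r) * (r + 1)^2 = (-(c^2)) * (r + 2)"
    proof -
      have tr: "t * (r + 1) = - c" using r0 by (simp add: t_def)
      have "(2 * t * c + t^2 * r) * (r + 1)^2 = 2 * c * (t * (r + 1)) * (r + 1) + r * (t * (r + 1))^2"
        by (simp add: power2_eq_square algebra_simps)
      also have "\<dots> = (-(c^2)) * (r + 2)" unfolding tr by (simp add: power2_eq_square algebra_simps)
      finally show ?thesis .
    qed
    moreover have "(-(c^2)) * (r + 2) < 0" using cp r0 by (simp add: mult_pos_pos)
    moreover have "0 \<le> (2 * t * c + t^2 * r) * (r + 1)^2" using ineq[of t] by simp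
    ultimately show False by linarith
  qed
  then have "z = 0" by (simp add: c_def)
  then have "A *v v = m *\<^sub>R v" by (simp add: z_def)
  then show ?thesis using nv bound unfolding m_def q_def by auto
qed

lemma neg_mv: "(- A) *v x = - (A *v (x::real^'n))" for A :: "real^'n^'n"
  using matrix_vector_mult_diff_rdistrib[of 0 A x] by simp

lemma transpose_neg': "transpose (- A) = - transpose (A::real^'n^'n)"
  by (simp add: transpose_def vec_eq_iff)

lemma eig_orth:
  fixes A :: "real^'n^'n"
  assumes sym: "transpose A = A" and "A *v u = s *\<^sub>R u" "A *v w = t *\<^sub>R w" "s \<noteq> t"
  shows "u \<bullet> w = 0"
proof -
  have "s * (u \<bullet> w) = (A *v u) \<bullet> w" using assms by simp
  also have "\<dots> = u \<bullet> (A *v w)" by (rule sym_inner[OF sym])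
  also have "\<dots> = t * (u \<bullet> w)" using assms by simp
  finally have "(s - t) * (u \<bullet> w) = 0" by (simp add: algebra_simps)
  then show ?thesis using assms by simp
qed

lemma eig_finite:
  fixes A :: "real^'n^'n"
  assumes sym: "transpose A = A"
  shows "finite (eigenvalues A)"
proof (rule ccontr)
  assume inf: "infinite (eigenvalues A)"
  obtain T where T: "T \<subseteq> eigenvalues A" "finite T" "card T = CARD('n) + 1"
    using infinite_arbitrarily_large[OF inf, of "CARD('n) + 1"] by blast
  define f where "f t = (SOME u. u \<noteq> 0 \<and> A *v u = t *\<^sub>R u)" for t
  have fp: "f t \<noteq> 0 \<and> A *v f t = t *\<^sub>R f t" if "t \<in> eigenvalues A" for t
  proof -
    have "\<exists>u. u \<noteq> 0 \<and> A *v u = t *\<^sub>R u" using that by (simp add: eigenvalues_def)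
    then show ?thesis unfolding f_def by (rule someI_ex)
  qed
  have orth: "f s \<bullet> f t = 0" if "s \<in> T" "t \<in> T" "s \<noteq> t" for s t
  proof -
    have "s \<in> eigenvalues A" "t \<in> eigenvalues A" using that T(1) by auto
    then have "A *v f s = s *\<^sub>R f s" "A *v f t = t *\<^sub>R f t" using fp by auto
    then show ?thesis using eig_orth[OF sym, of "f s" s "f t" t] that(3) by simp
  qed
  have inj: "inj_on f T"
  proof (rule inj_onI)
    fix s t assume st: "s \<in> T" "t \<in> T" "f s = f t"
    show "s = t"
    proof (rule ccontr)
      assume "s \<noteq> t"
      then have "f s \<bullet> f s = 0" using orth[of s t] st by simp
      moreover have "f s \<noteq> 0" using fp[of s] st T(1) by auto
      ultimately show False by simp
    qed
  qed
  have "pairwise orthogonal (f ` T)"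
    unfolding pairwise_def orthogonal_def
  proof (intro ballI impI)
    fix a b assume ab: "a \<in> f ` T" "b \<in> f ` T" "a \<noteq> b"
    then obtain s t where st: "s \<in> T" "t \<in> T" "a = f s" "b = f t" by blast
    then have "s \<noteq> t" using ab(3) by auto
    then show "a \<bullet> b = 0" using orth[OF st(1,2)] st(3,4) by simp
  qed
  moreover have "0 \<notin> f ` T"
  proof
    assume "0 \<in> f ` T"
    then obtain t where "t \<in> T" "0 = f t" by blast
    then show False using fp[of t] T(1) by auto
  qed
  ultimately have "independent (f ` T)" by (rule pairwise_orthogonal_independent)
  then have "card (f ` T) \<le> DIM(real^'n)" using independent_bound[of "f ` T"] by simp
  then have "card T \<le> CARD('n)" unfolding card_image[OF inj] by simp
  then show False using T(3) by simp
qed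

lemma lam_min_props:
  fixes A :: "real^'n^'n"
  assumes sym: "transpose A = A"
  shows "(\<exists>v. norm v = 1 \<and> (A *v v) \<bullet> v = lam_min A) \<and> (\<forall>x. lam_min A * (x \<bullet> x) \<le> (A *v x) \<bullet> x)"
proof -
  obtain v where v: "norm v = 1" "A *v v = ((A *v v) \<bullet> v) *\<^sub>R v"
    "\<And>x. ((A *v v) \<bullet> v) * (x \<bullet> x) \<le> (A *v x) \<bullet> x"
    using sym_min[OF sym] by blast
  define m where "m = (A *v v) \<bullet> v"
  have "v \<noteq> 0" using v(1) by auto
  then have mE: "m \<in> eigenvalues A" unfolding eigenvalues_def mem_Collect_eq m_def using v(2) by blast
  have least: "m \<le> t" if "t \<in> eigenvalues A" for t
  proof -
    have "\<exists>u. u \<noteq> 0 \<and> A *v u = t *\<^sub>R u" using that by (simp add: eigenvalues_def)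
    then obtain u where u: "u \<noteq> 0" "A *v u = t *\<^sub>R u" by (elim exE conjE)
    have "m * (u \<bullet> u) \<le> t * (u \<bullet> u)" using v(3)[of u] u by (simp add: m_def)
    moreover have "u \<bullet> u > 0" using u by simp
    ultimately show ?thesis by simp
  qed
  have "lam_min A = m" unfolding lam_min_def
    by (rule Min_eqI[OF eig_finite[OF sym] least mE])
  then show ?thesis using v m_def by auto
qed

lemma lam_max_props:
  fixes A :: "real^'n^'n"
  assumes sym: "transpose A = A"
  shows "(\<exists>v. norm v = 1 \<and> (A *v v) \<bullet> v = lam_max A) \<and> (\<forall>x. (A *v x) \<bullet> x \<le> lam_max A * (x \<bullet> x))"
proof -
  have sym': "transpose (- A) = - A" using sym by (simp add: transpose_neg')
  obtain v where v: "norm v = 1" "(- A) *v v = (((- A) *v v) \<bullet> v) *\<^sub>R v"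
    "\<And>x. (((- A) *v v) \<bullet> v) * (x \<bullet> x) \<le> ((- A) *v x) \<bullet> x"
    using sym_min[OF sym'] by blast
  define m where "m = (A *v v) \<bullet> v"
  have v2: "A *v v = m *\<^sub>R v" using v(2) unfolding neg_mv m_def by (simp add: neg_equal_iff_equal)
  have v3: "(A *v x) \<bullet> x \<le> m * (x \<bullet> x)" for x using v(3)[of x] unfolding neg_mv m_def by simp
  have "v \<noteq> 0" using v(1) by auto
  then have mE: "m \<in> eigenvalues A" unfolding eigenvalues_def mem_Collect_eq using v2 by blast
  have greatest: "t \<le> m" if "t \<in> eigenvalues A" for t
  proof -
    have "\<exists>u. u \<noteq> 0 \<and> A *v u = t *\<^sub>R u" using that by (simp add: eigenvalues_def)
    then obtain u where u: "u \<noteq> 0" "A *v u = t *\<^sub>R u" by (elim exE conjE)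
    have "t * (u \<bullet> u) \<le> m * (u \<bullet> u)" using v3[of u] u by simp
    moreover have "u \<bullet> u > 0" using u by simp
    ultimately show ?thesis by simp
  qed
  have "lam_max A = m" unfolding lam_max_def
    by (rule Max_eqI[OF eig_finite[OF sym] greatest mE])
  then show ?thesis using v v3 m_def by auto
qed

lemma mv_bound:
  fixes M :: "real^'n^'n"
  shows "norm (M *v x) \<le> (real CARD('n) * real CARD('n) * norm M) * norm x"
proof -
  have "norm (M *v x) \<le> onorm ((*v) M) * norm x"
    by (rule onorm[OF matrix_vector_mul_bounded_linear])
  also have "onorm ((*v) M) \<le> real CARD('n) * real CARD('n) * norm M"
  proof (rule onorm_le_matrix_component)
    fix i j
    have "\<bar>M$i$j\<bar> \<le> norm (M$i)" by (rule component_le_norm_cart)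
    also have "\<dots> \<le> norm M" by (rule Finite_Cartesian_Product.norm_nth_le)
    finally show "\<bar>M$i$j\<bar> \<le> norm M" .
  qed
  then have "onorm ((*v) M) * norm x \<le> (real CARD('n) * real CARD('n) * norm M) * norm x"
    by (rule mult_right_mono) simp
  finally show ?thesis .
qed

lemma lam_min_lip:
  fixes A B :: "real^'n^'n"
  assumes "transpose A = A" "transpose B = B"
  shows "lam_min A \<le> lam_min B + real CARD('n) * real CARD('n) * norm (A - B)"
proof -
  obtain v where v: "norm v = 1" "(B *v v) \<bullet> v = lam_min B" using lam_min_props[OF assms(2)] by blast
  have vv: "v \<bullet> v = 1" using v(1) by (simp add: dot_square_norm)
  have "lam_min A \<le> (A *v v) \<bullet> v" using lam_min_props[OF assms(1)] vv by (metis mult.right_neutral)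
  also have "(A *v v) \<bullet> v = (B *v v) \<bullet> v + ((A - B) *v v) \<bullet> v"
    by (simp add: matrix_vector_mult_diff_rdistrib inner_diff_left)
  also have "((A - B) *v v) \<bullet> v \<le> norm ((A - B) *v v) * norm v"
    using Cauchy_Schwarz_ineq2[of "(A - B) *v v" v] by linarith
  also have "\<dots> \<le> real CARD('n) * real CARD('n) * norm (A - B)"
    using mv_bound[of "A - B" v] v(1) by simp
  finally show ?thesis using v(2) by simp
qed

lemma lam_min_cont:
  fixes S :: "(real^'n^'n) set"
  assumes "S \<subseteq> Sym"
  shows "continuous_on S lam_min"
  unfolding continuous_on_iff
proof (intro ballI allI impI)
  fix x e assume x: "x \<in> S" and e: "(e::real) > 0"
  define C where "C = real CARD('n) * real CARD('n)"
  have C: "C > 0" by (simp add: C_def)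
  show "\<exists>d>0. \<forall>x'\<in>S. dist x' x < d \<longrightarrow> dist (lam_min x') (lam_min x) < e"
  proof (intro exI[of _ "e / C"] conjI ballI impI)
    show "e / C > 0" using e C by simp
    fix y assume y: "y \<in> S" and d: "dist y x < e / C"
    have sx: "transpose x = x" and sy: "transpose y = y" using x y assms by (auto simp: Sym_def)
    have n: "norm (y - x) = dist y x" "norm (x - y) = dist y x" by (simp_all add: dist_norm norm_minus_commute)
    have "C * dist y x < e" using d C by (simp add: field_simps)
    moreover have "lam_min y \<le> lam_min x + C * dist y x" using lam_min_lip[OF sy sx] n by (simp add: C_def)
    moreover have "lam_min x \<le> lam_min y + C * dist y x" using lam_min_lip[OF sx sy] n by (simp add: C_def)
    ultimately show "dist (lam_min y) (lam_min x) < e" by (simp add: dist_real_def abs_less_iff)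
  qed
qed

lemma affine_facts:
  fixes f :: "real \<Rightarrow> real"
  assumes a: "a > 0" and f: "\<And>t. f t = a * t + b"
  shows "mono f" "bij f" "inv f 0 = - b / a"
proof -
  show "mono f" by (rule monoI) (simp add: f a)
  have inj: "inj f" by (rule injI) (use a in \<open>simp add: f\<close>)
  have "surj f" by (rule surjI[of f "\<lambda>y. (y - b) / a"]) (use a in \<open>simp add: f\<close>)
  then show "bij f" using inj by (simp add: bij_def)
  show "inv f 0 = - b / a" by (rule inv_f_eq[OF inj]) (use a in \<open>simp add: f\<close>)
qed

lemma part3:
  fixes \<Omega> :: "(real^'n) set"
    and D :: "(((real^'n) \<times> real \<times> (real^'n)) \<times> (real^'n^'n)) set"
    and F :: "(real^'n) \<times> real \<times> (real^'n) \<Rightarrow> real^'n^'n \<Rightarrow> real"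
  assumes adm: "admissible_D \<Omega> D" and U: "classU_with \<Omega> D F lam H"
    and w: "\<omega> \<in> \<Omega> \<times> UNIV \<times> UNIV" and S: "admissible_S D \<omega> S1 S2"
  shows "classM_props D F \<omega> S1 S2
              (\<lambda>t M. lam * t - lam * lam_min M - H \<omega> - F \<omega> M)
              (\<lambda>t M. lam * t + lam * lam_min M + H \<omega> - F \<omega> (- M))"
proof -
  have cont: "continuous_in_matrix D F" and lam: "lam > 0"
    and cu: "\<And>B M. (\<omega>, B) \<in> D \<Longrightarrow> (\<omega>, M) \<in> D \<Longrightarrow> B \<le>\<^sub>L M \<Longrightarrow>
        F \<omega> B - F \<omega> M \<ge> lam * trace (M - B) + H \<omega>"
    using U w unfolding classU_with_def by blast+
  have S1: "S1 \<subseteq> Sym" "\<And>M. M \<in> S1 \<Longrightarrow> (\<omega>, M) \<in> D"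
    and S2: "S2 \<subseteq> Sym" "\<And>M. M \<in> S2 \<Longrightarrow> (\<omega>, - M) \<in> D"
    using S unfolding admissible_S_def by blast+
  have symD: "transpose X = X" if "(\<omega>', X) \<in> D" for \<omega>' X
    using adm that unfolding admissible_D_def Sym_def by blast
  have symS1: "transpose M = M" if "M \<in> S1" for M using S1 that unfolding Sym_def by blast
  have symS2: "transpose M = M" if "M \<in> S2" for M using S2 that unfolding Sym_def by blast
  have af1: "mono (\<lambda>t. lam * t - lam * lam_min M - H \<omega> - F \<omega> M) \<and> bij (\<lambda>t. lam * t - lam * lam_min M - H \<omega> - F \<omega> M)" for M
    using affine_facts(1,2)[OF lam, of "\<lambda>t. lam * t - lam * lam_min M - H \<omega> - F \<omega> M"
      "- (lam * lam_min M + H \<omega> + F \<omega> M)"] by simp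
  have af2: "mono (\<lambda>t. lam * t + lam * lam_min M + H \<omega> - F \<omega> (- M)) \<and> bij (\<lambda>t. lam * t + lam * lam_min M + H \<omega> - F \<omega> (- M))" for M
    using affine_facts(1,2)[OF lam, of "\<lambda>t. lam * t + lam * lam_min M + H \<omega> - F \<omega> (- M)"
      "lam * lam_min M + H \<omega> - F \<omega> (- M)"] by simp
  have inv1: "inv (\<lambda>t. lam * t - lam * lam_min M - H \<omega> - F \<omega> M) 0 = (lam * lam_min M + H \<omega> + F \<omega> M) / lam" for M
    using affine_facts(3)[OF lam, of "\<lambda>t. lam * t - lam * lam_min M - H \<omega> - F \<omega> M"
      "- (lam * lam_min M + H \<omega> + F \<omega> M)"] by simp
  have inv2: "inv (\<lambda>t. lam * t + lam * lam_min M + H \<omega> - F \<omega> (- M)) 0 = - (lam * lam_min M + H \<omega> - F \<omega> (- M)) / lam" for M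
    using affine_facts(3)[OF lam, of "\<lambda>t. lam * t + lam * lam_min M + H \<omega> - F \<omega> (- M)"
      "lam * lam_min M + H \<omega> - F \<omega> (- M)"] by simp
  have Fc: "continuous_on {X. (\<omega>, X) \<in> D} (F \<omega>)" using cont unfolding continuous_in_matrix_def by blast
  have c1: "continuous_on S1 (\<lambda>M. inv (\<lambda>t. lam * t - lam * lam_min M - H \<omega> - F \<omega> M) 0)"
    unfolding inv1
    by (intro continuous_intros lam_min_cont[OF S1(1)] continuous_on_subset[OF Fc]) (use S1 lam in auto)
  have Fc2: "continuous_on S2 (\<lambda>M. F \<omega> (- M))"
    by (rule continuous_on_compose2[OF Fc]) (auto intro: continuous_intros S2)
  have c2: "continuous_on S2 (\<lambda>M. inv (\<lambda>t. lam * t + lam * lam_min M + H \<omega> - F \<omega> (- M)) 0)"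
    unfolding inv2
    by (intro continuous_intros lam_min_cont[OF S2(1)] Fc2) (use lam in auto)
  have p3: "- F \<omega> X \<le> lam * lam_min X - lam * lam_min M - H \<omega> - F \<omega> M"
    if M: "M \<in> S1" and X: "(\<omega>, X) \<in> D" and le: "X \<le>\<^sub>L M" for M X
  proof -
    have sX: "transpose X = X" using symD X by blast
    have sM: "transpose M = M" using symS1 M by blast
    obtain v where v: "norm v = 1" "(X *v v) \<bullet> v = lam_min X" using lam_min_props[OF sX] by blast
    have vv: "v \<bullet> v = 1" using v(1) by (simp add: dot_square_norm)
    have lm: "lam_min M \<le> (M *v v) \<bullet> v" using lam_min_props[OF sM] vv by (metis mult.right_neutral)
    have psd: "0 \<le> ((M - X) *v x) \<bullet> x" for x
      using le unfolding loewner_le_def by (simp add: matrix_vector_mult_diff_rdistrib inner_diff_left)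
    have "((M - X) *v v) \<bullet> v \<le> trace (M - X)" using psd_trace[of "M - X" v, OF psd] vv by simp
    then have "lam_min M - lam_min X \<le> trace (M - X)" using lm v(2)
      by (simp add: matrix_vector_mult_diff_rdistrib inner_diff_left)
    then have "lam * (lam_min M - lam_min X) \<le> lam * trace (M - X)" using lam by (simp add: mult_left_mono)
    moreover have "F \<omega> X - F \<omega> M \<ge> lam * trace (M - X) + H \<omega>" using cu[OF X S1(2)[OF M] le] .
    ultimately show ?thesis by (simp add: algebra_simps)
  qed
  have p4: "- F \<omega> Y \<ge> lam * lam_max Y + lam * lam_min M + H \<omega> - F \<omega> (- M)"
    if M: "M \<in> S2" and Y: "(\<omega>, Y) \<in> D" and le: "- Y \<le>\<^sub>L M" for M Y
  proof -
    have sY: "transpose Y = Y" using symD Y by blast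
    have sM: "transpose M = M" using symS2 M by blast
    obtain v where v: "norm v = 1" "(Y *v v) \<bullet> v = lam_max Y" using lam_max_props[OF sY] by blast
    have vv: "v \<bullet> v = 1" using v(1) by (simp add: dot_square_norm)
    have lm: "lam_min M \<le> (M *v v) \<bullet> v" using lam_min_props[OF sM] vv by (metis mult.right_neutral)
    have le': "- M \<le>\<^sub>L Y" using le unfolding loewner_le_def neg_mv inner_minus_left by (meson neg_le_iff_le minus_le_iff)
    have psd: "0 \<le> ((Y - - M) *v x) \<bullet> x" for x
      using le'[unfolded loewner_le_def, rule_format, of x]
      by (simp add: neg_mv matrix_vector_mult_add_rdistrib inner_add_left)
    have "((Y - - M) *v v) \<bullet> v \<le> trace (Y - - M)" using psd_trace[of "Y - - M" v, OF psd] vv by simp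
    then have "lam_max Y + lam_min M \<le> trace (Y - - M)" using lm v(2)
      by (simp add: matrix_vector_mult_add_rdistrib inner_add_left)
    then have "lam * (lam_max Y + lam_min M) \<le> lam * trace (Y - - M)" using lam by (simp add: mult_left_mono)
    moreover have "F \<omega> (- M) - F \<omega> Y \<ge> lam * trace (Y - - M) + H \<omega>" using cu[OF S2(2)[OF M] Y le'] .
    ultimately show ?thesis by (simp add: algebra_simps)
  qed
  show ?thesis unfolding classM_props_def
    using af1 af2 c1 c2 p3 p4 by auto
qed

lemma mat_mv: "mat c *v (v::real^'n) = c *\<^sub>R v"
proof -
  have "(mat c *v v) $ i = c * v $ i" for i
  proof -
    have "(mat c *v v) $ i = (\<Sum>j\<in>UNIV. (if i = j then c * v $ j else 0))"
      unfolding matrix_vector_mult_def mat_def by (simp add: if_distrib[of "\<lambda>x. x * _"] cong: if_cong)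
    also have "\<dots> = c * v $ i" by (simp add: sum.delta)
    finally show ?thesis .
  qed
  then show ?thesis by (simp add: vec_eq_iff)
qed

lemma trace_mat: "trace (mat c :: real^'n^'n) = c * real CARD('n)"
  by (simp add: trace_def mat_def)

lemma eig_mat: "eigenvalues (mat c :: real^'n^'n) = {c}"
proof -
  have "(axis undefined 1 :: real^'n) \<noteq> 0" by (simp add: axis_eq_0_iff)
  then show ?thesis unfolding eigenvalues_def mat_mv
    by (auto simp: scaleR_cancel_right)
qed

lemma lam_mat: "lam_min (mat c :: real^'n^'n) = c" "lam_max (mat c :: real^'n^'n) = c"
  by (simp_all add: lam_min_def lam_max_def eig_mat)

definition Rbad :: "(real^'n) \<times> real \<times> (real^'n) \<Rightarrow> real" where
  "Rbad w = (if fst (snd w) = 0 then 0 else 1 / \<bar>fst (snd w)\<bar>)"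

definition Dbad :: "(((real^'n) \<times> real \<times> (real^'n)) \<times> (real^'n^'n)) set" where
  "Dbad = {(w, mat c) | w c. 0 \<le> c \<and> c \<le> Rbad w}"

lemma Rbad_nonneg: "0 \<le> Rbad w" by (simp add: Rbad_def)

lemma bad_classM: "classM (UNIV :: (real^'n) set) Dbad (\<lambda>_ _. 0)"
  unfolding classM_def
proof (intro conjI ballI allI impI)
  show "continuous_in_matrix (Dbad :: (((real^'n) \<times> real \<times> (real^'n)) \<times> (real^'n^'n)) set) (\<lambda>_ _. 0)"
    by (simp add: continuous_in_matrix_def)
  fix w :: "(real^'n) \<times> real \<times> (real^'n)" and S1 S2
  show "\<exists>g1 g2. classM_props Dbad (\<lambda>_ _. 0) w S1 S2 g1 g2"
  proof (intro exI)
    have a1: "mono (\<lambda>t::real. t) \<and> bij (\<lambda>t::real. t)" using affine_facts(1,2)[of 1 "\<lambda>t. t" 0] by simp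
    have a2: "mono (\<lambda>t::real. t - Rbad w) \<and> bij (\<lambda>t::real. t - Rbad w)"
      using affine_facts(1,2)[of 1 "\<lambda>t. t - Rbad w" "- Rbad w"] by simp
    show "classM_props Dbad (\<lambda>_ _. 0) w S1 S2 (\<lambda>t M. t) (\<lambda>t M. t - Rbad w)"
      unfolding classM_props_def
    proof (intro conjI ballI allI impI)
      fix M X assume "(w, X) \<in> Dbad"
      then obtain c where "X = mat c" "0 \<le> c" unfolding Dbad_def by blast
      then show "- 0 \<le> lam_min X" by (simp add: lam_mat)
    next
      fix M Y assume "(w, Y) \<in> Dbad"
      then obtain c where "Y = mat c" "c \<le> Rbad w" unfolding Dbad_def by blast
      then show "lam_max Y - Rbad w \<le> - 0" by (simp add: lam_mat)
    qed (use a1 a2 in \<open>auto intro: continuous_on_const\<close>)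
  qed
qed

lemma bad_not_U: "\<not> classU (UNIV :: (real^'n) set) Dbad (\<lambda>_ _. 0)"
proof
  assume "classU (UNIV :: (real^'n) set) Dbad (\<lambda>_ _. 0)"
  then obtain lam H where U: "classU_with (UNIV :: (real^'n) set) Dbad (\<lambda>_ _. 0) lam H"
    unfolding classU_def by blast
  have lam: "lam > 0" and lb: "locally_bounded_on (UNIV :: ((real^'n) \<times> real \<times> (real^'n)) set) H"
    and cu: "\<And>w B M. (w, B) \<in> Dbad \<Longrightarrow> (w, M) \<in> Dbad \<Longrightarrow> B \<le>\<^sub>L M \<Longrightarrow>
        0 - 0 \<ge> lam * trace (M - B) + H w"
    using U unfolding classU_with_def by auto
  define w0 :: "(real^'n) \<times> real \<times> (real^'n)" where "w0 = (0, 0, 0)"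
  obtain U where U: "open U" "w0 \<in> U" "bounded (H ` (U \<inter> UNIV))"
    using lb unfolding locally_bounded_on_def by blast
  obtain e where e: "e > 0" "ball w0 e \<subseteq> U" using U(1,2) open_contains_ball by blast
  obtain K where K: "\<And>y. y \<in> U \<Longrightarrow> \<bar>H y\<bar> \<le> K" using U(3) unfolding bounded_real by auto
  define u where "u = min (e / 2) (lam / (\<bar>K\<bar> + 1))"
  have u: "u > 0" "u < e" "u \<le> lam / (\<bar>K\<bar> + 1)" using e lam by (auto simp: u_def)
  define w :: "(real^'n) \<times> real \<times> (real^'n)" where "w = (0, u, 0)"
  have "dist w0 w = u" using u by (simp add: w0_def w_def dist_Pair_Pair)
  then have "w \<in> U" using e u by auto
  then have Hw: "\<bar>H w\<bar> \<le> K" by (rule K)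
  define R where "R = 1 / u"
  have R: "Rbad w = R" using u by (simp add: Rbad_def w_def R_def)
  have Rp: "R > 0" using u by (simp add: R_def)
  have in0: "(w, mat 0) \<in> Dbad"
  proof -
    have "(w, mat 0) = (w, mat 0) \<and> 0 \<le> (0::real) \<and> 0 \<le> Rbad w" using R Rp by simp
    then show ?thesis unfolding Dbad_def by blast
  qed
  have inR: "(w, mat R) \<in> Dbad"
  proof -
    have "(w, mat R) = (w, mat R) \<and> 0 \<le> R \<and> R \<le> Rbad w" using R Rp by simp
    then show ?thesis unfolding Dbad_def by blast
  qed
  have le: "mat 0 \<le>\<^sub>L mat R" unfolding loewner_le_def mat_mv using Rp by simp
  have c: "0 \<ge> lam * R * real CARD('n) + H w" using cu[OF in0 inR le] by (simp add: trace_mat)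
  have "lam * R \<ge> \<bar>K\<bar> + 1"
  proof -
    have "u * (\<bar>K\<bar> + 1) \<le> lam" using u(3) by (simp add: field_simps)
    then show ?thesis using u(1) by (simp add: R_def field_simps)
  qed
  moreover have "lam * R * real CARD('n) \<ge> lam * R"
  proof -
    have "real CARD('n) \<ge> 1" by simp
    then have "lam * R * 1 \<le> lam * R * real CARD('n)" using lam Rp by (intro mult_left_mono) auto
    then show ?thesis by simp
  qed
  ultimately show False using c Hw by linarith
qed


theorem lemma1:
  fixes \<Omega> :: "(real^'n) set"
    and D :: "(((real^'n) \<times> real \<times> (real^'n)) \<times> (real^'n^'n)) set"
    and F :: "(real^'n) \<times> real \<times> (real^'n) \<Rightarrow> real^'n^'n \<Rightarrow> real"
    and lam :: real
    and H :: "(real^'n) \<times> real \<times> (real^'n) \<Rightarrow> real"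
    and \<omega> :: "(real^'n) \<times> real \<times> (real^'n)"
  assumes "is_domain \<Omega>"
    and "admissible_D \<Omega> D"
    and "degenerate_elliptic D F"
    and "classU_with \<Omega> D F lam H"
    and "\<omega> \<in> \<Omega> \<times> UNIV \<times> UNIV"
  shows "(\<forall>(\<Omega>'::(real^'n) set) D' F'. is_domain \<Omega>' \<and> admissible_D \<Omega>' D' \<and>
            degenerate_elliptic D' F' \<and> classU \<Omega>' D' F' \<longrightarrow> classM \<Omega>' D' F')
      \<and> (\<exists>(\<Omega>'::(real^'n) set) D' F'. is_domain \<Omega>' \<and> admissible_D \<Omega>' D' \<and>
            degenerate_elliptic D' F' \<and> classM \<Omega>' D' F' \<and> \<not> classU \<Omega>' D' F')
      \<and> (\<forall>S1 S2. admissible_S D \<omega> S1 S2 \<longrightarrow>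
            classM_props D F \<omega> S1 S2
              (\<lambda>t M. lam * t - lam * lam_min M - H \<omega> - F \<omega> M)
              (\<lambda>t M. lam * t + lam * lam_min M + H \<omega> - F \<omega> (- M)))
      \<and> classM \<Omega> D F"
  proof -
  have P1: "\<forall>(\<Omega>'::(real^'n) set) D' F'. is_domain \<Omega>' \<and> admissible_D \<Omega>' D' \<and>
            degenerate_elliptic D' F' \<and> classU \<Omega>' D' F' \<longrightarrow> classM \<Omega>' D' F'"
  proof (intro allI impI)
    fix \<Omega>' :: "(real^'n) set" and D' F'
    assume h: "is_domain \<Omega>' \<and> admissible_D \<Omega>' D' \<and> degenerate_elliptic D' F' \<and> classU \<Omega>' D' F'"
    then obtain l G where UG: "classU_with \<Omega>' D' F' l G" unfolding classU_def by blast
    show "classM \<Omega>' D' F'" unfolding classM_def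
    proof (intro conjI ballI allI impI)
      show "continuous_in_matrix D' F'" using UG unfolding classU_with_def by blast
      fix w S1 S2 assume "w \<in> \<Omega>' \<times> UNIV \<times> UNIV" "admissible_S D' w S1 S2"
      then show "\<exists>g1 g2. classM_props D' F' w S1 S2 g1 g2"
        using part3[OF _ UG] h by blast
    qed
  qed
  have P2: "\<exists>(\<Omega>'::(real^'n) set) D' F'. is_domain \<Omega>' \<and> admissible_D \<Omega>' D' \<and>
            degenerate_elliptic D' F' \<and> classM \<Omega>' D' F' \<and> \<not> classU \<Omega>' D' F'"
  proof (intro exI conjI)
    show "is_domain (UNIV :: (real^'n) set)" by (simp add: is_domain_def connected_UNIV)
    show "admissible_D (UNIV :: (real^'n) set) Dbad"
      unfolding admissible_D_def Dbad_def Sym_def by auto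
    show "degenerate_elliptic (Dbad :: (((real^'n) \<times> real \<times> (real^'n)) \<times> (real^'n^'n)) set) (\<lambda>_ _. 0)"
      by (simp add: degenerate_elliptic_def)
    show "classM (UNIV :: (real^'n) set) Dbad (\<lambda>_ _. 0)" by (rule bad_classM)
    show "\<not> classU (UNIV :: (real^'n) set) Dbad (\<lambda>_ _. 0)" by (rule bad_not_U)
  qed
  have P3: "\<forall>S1 S2. admissible_S D \<omega> S1 S2 \<longrightarrow>
            classM_props D F \<omega> S1 S2
              (\<lambda>t M. lam * t - lam * lam_min M - H \<omega> - F \<omega> M)
              (\<lambda>t M. lam * t + lam * lam_min M + H \<omega> - F \<omega> (- M))"
    using part3[OF assms(2) assms(4) assms(5)] by blast
  have P4: "classM \<Omega> D F"
    using P1 assms(1-4) unfolding classU_def by blast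
  show ?thesis using P1 P2 P3 P4 by blast
qed

end
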